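(* There are at least $3n/4$ good indices $s\in[n]$.
   Context: Consider clustering with noisy queries with $k=2$ clusters. Let $\mathcal{D}$ be the distribution of instances on $n$ vertices $v_1,\dots,v_n$ in which each vertex is independently assigned to one of two clusters $C_0,C_1$ with probability $1/2$ each (let $c(i)$ denote the cluster of $v_i$); then, with the clusters fixed, each pair of vertices in the same cluster gets an edge (the oracle answers $+1$) with probability $\frac{1}{2}+\frac{\delta}{2}$ and each pair in different clusters gets an edge with probability $\frac{1}{2}-\frac{\delta}{2}$, independently across pairs. Let $\mathcal{A}$ be any (randomized) algorithm for clustering with noisy queries that correctly recovers all clusters with probability at least $7/8$ on an instance sampled from $\mathcal{D}$, i.e. $\Pr[\mathcal{E}]\ge 7/8$ where $\mathcal{E}$ is the event that $\mathcal{A}$ recovers all clusters correctly. For $i\in[n]$, let $\mathcal{E}_i$ be the event that $\mathcal{A}$ outputs the correct cluster label for $v_i$, i.e. $\tilde{c}(i)=c(i)$. All probabilities are over both $\mathcal{D}$ and the randomness of $\mathcal{A}$. An index $s\in[n]$ is called good if $\Pr[\mathcal{E}_s\mid\mathcal{E}_1,\dots,\mathcal{E}_{s-1}]\ge 1-1/n$. *)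

theory Defs
  imports "HOL-Probability.Probability"
begin

text \<open>A cluster assignment is c :: nat => bool (False = C_0, True = C_1),
  defined on {1..n} (default False elsewhere). The oracle answers are a graph
  G :: nat * nat => bool, G (i,j) for 1 <= i < j <= n meaning an edge (+1).\<close>

definition cluster_pmf :: "nat \<Rightarrow> (nat \<Rightarrow> bool) pmf" where
  "cluster_pmf n = Pi_pmf {1..n} False (\<lambda>_. bernoulli_pmf (1/2))"

definition edge_pmf :: "nat \<Rightarrow> real \<Rightarrow> (nat \<Rightarrow> bool) \<Rightarrow> (nat \<times> nat \<Rightarrow> bool) pmf" where
  "edge_pmf n \<delta> c = Pi_pmf {(i,j). 1 \<le> i \<and> i < j \<and> j \<le> n} False
     (\<lambda>(i,j). bernoulli_pmf (if c i = c j then 1/2 + \<delta>/2 else 1/2 - \<delta>/2))"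

definition instance_pmf :: "nat \<Rightarrow> real \<Rightarrow> ((nat \<Rightarrow> bool) \<times> (nat \<times> nat \<Rightarrow> bool)) pmf" where
  "instance_pmf n \<delta> = do { c \<leftarrow> cluster_pmf n; G \<leftarrow> edge_pmf n \<delta> c; return_pmf (c, G) }"

text \<open>A randomized algorithm only has access to the oracle answers G and outputs a
  label for each vertex; it is modelled as a Markov kernel A :: graph => labelling pmf.\<close>
definition run_pmf :: "nat \<Rightarrow> real \<Rightarrow> ((nat \<times> nat \<Rightarrow> bool) \<Rightarrow> (nat \<Rightarrow> bool) pmf)
    \<Rightarrow> ((nat \<Rightarrow> bool) \<times> (nat \<Rightarrow> bool)) pmf" where
  "run_pmf n \<delta> A = do { (c, G) \<leftarrow> instance_pmf n \<delta>; l \<leftarrow> A G; return_pmf (c, l) }"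

definition correct_upto :: "nat \<Rightarrow> ((nat \<Rightarrow> bool) \<times> (nat \<Rightarrow> bool)) set" where
  "correct_upto k = {(c, l). \<forall>i\<in>{1..k}. l i = c i}"

definition good_index :: "nat \<Rightarrow> real \<Rightarrow> ((nat \<times> nat \<Rightarrow> bool) \<Rightarrow> (nat \<Rightarrow> bool) pmf) \<Rightarrow> nat \<Rightarrow> bool" where
  "good_index n \<delta> A s \<longleftrightarrow>
     measure_pmf.prob (run_pmf n \<delta> A) (correct_upto s) /
     measure_pmf.prob (run_pmf n \<delta> A) (correct_upto (s - 1)) \<ge> 1 - 1 / real n"

end

theory Submission
  imports Defs
begin

theorem lemma5p3:
  fixes n :: nat and \<delta> :: real and A :: "(nat \<times> nat \<Rightarrow> bool) \<Rightarrow> (nat \<Rightarrow> bool) pmf"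
  assumes "0 \<le> \<delta>" and "\<delta> \<le> 1"
  assumes "measure_pmf.prob (run_pmf n \<delta> A) (correct_upto n) \<ge> 7/8"
  shows "real (card {s \<in> {1..n}. good_index n \<delta> A s}) \<ge> 3 * real n / 4"
proof -
  define M where "M = run_pmf n \<delta> A"
  define p where "p k = measure_pmf.prob M (correct_upto k)" for k
  define r where "r s = p s / p (s - 1)" for s
  have pn: "p n \<ge> 7/8" using assms(3) by (simp add: p_def M_def)
  have p0: "p 0 = 1" unfolding p_def correct_upto_def by simp
  have mono: "p k \<ge> p m" if "k \<le> m" for k m
  proof -
    have "correct_upto m \<subseteq> correct_upto k" using that unfolding correct_upto_def by auto
    thus ?thesis unfolding p_def by (simp add: measure_pmf.finite_measure_mono)
  qed
  have ppos: "p k > 0" if "k \<le> n" for k using mono[OF that] pn by linarith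
  have tele: "p m = (\<Prod>s\<in>{1..m}. r s)" if "m \<le> n" for m
    using that
  proof (induction m)
    case 0 then show ?case using p0 by simp
  next
    case (Suc m)
    have "p m > 0" using ppos Suc.prems by simp
    have "(\<Prod>s\<in>{1..Suc m}. r s) = (\<Prod>s\<in>{1..m}. r s) * r (Suc m)"
      by (simp add: prod.nat_ivl_Suc')
    also have "\<dots> = p m * (p (Suc m) / p m)" using Suc by (simp add: r_def)
    also have "\<dots> = p (Suc m)" using \<open>p m > 0\<close> by simp
    finally show ?case by simp
  qed
  have r01: "0 \<le> r s \<and> r s \<le> 1" if "s \<in> {1..n}" for s
  proof -
    have "p (s - 1) > 0" using that by (intro ppos) auto
    moreover have "p s \<le> p (s - 1)" using mono by simp
    moreover have "p s \<ge> 0" unfolding p_def by simp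
    ultimately show ?thesis unfolding r_def by (simp add: divide_le_eq_1)
  qed
  define G where "G = {s \<in> {1..n}. good_index n \<delta> A s}"
  define B where "B = {s \<in> {1..n}. \<not> good_index n \<delta> A s}"
  have gi: "good_index n \<delta> A s \<longleftrightarrow> r s \<ge> 1 - 1 / real n" for s
    unfolding good_index_def r_def p_def M_def by simp
  have cardGB: "card G + card B = n"
  proof -
    have "card G + card B = card (G \<union> B)"
      by (subst card_Un_disjoint) (auto simp: G_def B_def)
    also have "G \<union> B = {1..n}" by (auto simp: G_def B_def)
    finally show ?thesis by simp
  qed
  show ?thesis
  proof (rule ccontr)
    assume "\<not> ?thesis"
    hence cG: "real (card G) < 3 * real n / 4" by (simp add: G_def)
    hence bB: "real (card B) > real n / 4" using cardGB
      proof - have "real (card G) + real (card B) = real n" using cardGB by (metis of_nat_add) thus ?thesis using cG by linarith qed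
    hence n1: "n \<ge> 1" using cardGB by (cases n) auto
    have "{1..n} = G \<union> B" by (auto simp: G_def B_def)
    hence "p n = (\<Prod>s\<in>G \<union> B. r s)" using tele by simp
    also have "\<dots> = (\<Prod>s\<in>G. r s) * (\<Prod>s\<in>B. r s)"
      by (rule prod.union_disjoint) (auto simp: G_def B_def)
    also have "\<dots> \<le> 1 * (\<Prod>s\<in>B. r s)"
      apply (rule mult_right_mono)
       apply (rule prod_le_1) using r01 apply (auto simp: G_def)[1]
      apply (rule prod_nonneg) using r01 by (auto simp: B_def)
    also have "\<dots> \<le> (\<Prod>s\<in>B. 1 - 1 / real n)"
      unfolding mult_1_left
      apply (rule prod_mono) using r01 gi by (auto simp: B_def)
    also have "\<dots> = (1 - 1 / real n) ^ card B" by simp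
    also have "\<dots> \<le> exp (- 1 / real n) ^ card B"
      apply (rule power_mono)
      using exp_ge_add_one_self[of "- 1 / real n"] n1 by auto
    also have "\<dots> = exp (- real (card B) / real n)"
      by (simp add: exp_of_nat_mult[symmetric])
    also have "\<dots> < exp (- 1 / 4)"
      using bB n1 by (simp add: field_simps)
    also have "\<dots> = 1 / exp (1/4)" by (simp add: exp_minus field_simps)
    also have "\<dots> \<le> 1 / (1 + 1/4)"
      using exp_ge_add_one_self[of "1/4"] by (intro divide_left_mono) auto
    finally have "p n < 4/5" by simp
    thus False using pn by simp
  qed
qed

end
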